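(* Let $c,a,b\in V$ with $c=a+b$. The following three statements are equivalent: (1) $c=a+b$ is an $X2$-decomposition; (2) $c=a+b$ is a $2Y$-decomposition; (3) $\langle a,b\rangle=\|a\|_X\|b\|_Y$.
   Context: $V$ is a finite dimensional real vector space with a positive definite symmetric bilinear form $\langle\cdot,\cdot\rangle$ and euclidean norm $\|v\|_2=\sqrt{\langle v,v\rangle}$. $\|\cdot\|_X$ is a norm on $V$ and $\|\cdot\|_Y$ is its dual norm, $\|v\|_Y=\max\{\langle v,w\rangle : w\in V,\ \|w\|_X=1\}$. For two norms $\|\cdot\|_P,\|\cdot\|_Q$ on $V$ (each one of $X$, $Y$, $2$), a decomposition $c=a+b$ is called a $PQ$-decomposition if for every decomposition $c=a'+b'$ we have $\|a'\|_P>\|a\|_P$, or $\|b'\|_Q>\|b\|_Q$, or $(\|a'\|_P,\|b'\|_Q)=(\|a\|_P,\|b\|_Q)$. *)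

theory Defs
  imports "HOL-Analysis.Analysis"
begin

definition is_norm :: "('a::real_vector \<Rightarrow> real) \<Rightarrow> bool" where
  "is_norm N \<longleftrightarrow> (\<forall>x. 0 \<le> N x) \<and> (\<forall>x. N x = 0 \<longleftrightarrow> x = 0) \<and>
     (\<forall>r x. N (r *\<^sub>R x) = \<bar>r\<bar> * N x) \<and> (\<forall>x y. N (x + y) \<le> N x + N y)"

text \<open>Dual norm with respect to the inner product: the maximum of inner v w over the
  unit sphere of N (the maximum is attained, so it equals the supremum).\<close>
definition dual_norm :: "('a::real_inner \<Rightarrow> real) \<Rightarrow> 'a \<Rightarrow> real" where
  "dual_norm N v = Sup {v \<bullet> w | w. N w = 1}"

definition PQ_decomposition ::
  "('a::real_vector \<Rightarrow> real) \<Rightarrow> ('a \<Rightarrow> real) \<Rightarrow> 'a \<Rightarrow> 'a \<Rightarrow> 'a \<Rightarrow> bool" where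
  "PQ_decomposition P Q c a b \<longleftrightarrow> c = a + b \<and>
     (\<forall>a' b'. c = a' + b' \<longrightarrow>
        P a' > P a \<or> Q b' > Q b \<or> (P a', Q b') = (P a, Q b))"

end

theory Submission
  imports Defs
begin

lemma nN:
  assumes "is_norm N"
  shows "N 0 = 0" "N x \<ge> 0" "N (r *\<^sub>R x) = \<bar>r\<bar> * N x" "N (x + y) \<le> N x + N y"
    "N x = 0 \<longleftrightarrow> x = 0" "N (- x) = N x" "N (x - y) = N (y - x)"
proof -
  show "N x \<ge> 0" "N (r *\<^sub>R x) = \<bar>r\<bar> * N x" "N (x + y) \<le> N x + N y" "N x = 0 \<longleftrightarrow> x = 0"
    using assms unfolding is_norm_def by auto
  show "N 0 = 0" using assms unfolding is_norm_def by auto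
  have m: "N (- z) = N z" for z using assms unfolding is_norm_def
    by (metis abs_minus_cancel abs_one mult_1 scaleR_minus1_left)
  then show "N (- x) = N x" .
  show "N (x - y) = N (y - x)" using m[of "y - x"] by (metis minus_diff_eq)
qed

lemma N_sum:
  assumes "is_norm N" "finite S"
  shows "N (\<Sum>i\<in>S. f i) \<le> (\<Sum>i\<in>S. N (f i))"
  using assms(2)
proof (induction S rule: finite_induct)
  case empty then show ?case using nN(1)[OF assms(1)] by simp
next
  case (insert x F)
  then show ?case using nN(4)[OF assms(1), of "f x" "sum f F"] by simp
qed

lemma N_upper:
  fixes N :: "'a::euclidean_space \<Rightarrow> real"
  assumes "is_norm N"
  shows "\<exists>C\<ge>0. \<forall>x. N x \<le> C * norm x"
proof -
  define C where "C = (\<Sum>i\<in>Basis. N i)"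
  have C0: "C \<ge> 0" unfolding C_def using nN(2)[OF assms] by (simp add: sum_nonneg)
  have "N x \<le> C * norm x" for x
  proof -
    have "N x = N (\<Sum>i\<in>Basis. (x \<bullet> i) *\<^sub>R i)" by (simp add: euclidean_representation)
    also have "\<dots> \<le> (\<Sum>i\<in>Basis. N ((x \<bullet> i) *\<^sub>R i))" by (rule N_sum[OF assms]) simp
    also have "\<dots> = (\<Sum>i\<in>Basis. \<bar>x \<bullet> i\<bar> * N i)" using nN(3)[OF assms] by simp
    also have "\<dots> \<le> (\<Sum>i\<in>Basis. norm x * N i)"
      by (rule sum_mono) (simp add: Basis_le_norm mult_right_mono nN(2)[OF assms])
    also have "\<dots> = C * norm x" unfolding C_def by (simp add: sum_distrib_left mult.commute)
    finally show ?thesis .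
  qed
  then show ?thesis using C0 by blast
qed

lemma N_cont:
  fixes N :: "'a::euclidean_space \<Rightarrow> real"
  assumes "is_norm N"
  shows "continuous_on S N"
proof -
  obtain C where C: "C \<ge> 0" "\<And>x. N x \<le> C * norm x" using N_upper[OF assms] by blast
  have "C-lipschitz_on S N"
  proof (rule lipschitz_onI)
    fix x y
    have "N x \<le> N (x - y) + N y" using nN(4)[OF assms, of "x - y" y] by simp
    moreover have "N y \<le> N (x - y) + N x" using nN(4)[OF assms, of "y - x" x] nN(7)[OF assms, of x y] by simp
    ultimately have "\<bar>N x - N y\<bar> \<le> N (x - y)" by linarith
    also have "\<dots> \<le> C * norm (x - y)" by (rule C(2))
    finally show "dist (N x) (N y) \<le> C * dist x y" by (simp add: dist_real_def dist_norm)
  qed (rule C(1))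
  then show ?thesis by (rule lipschitz_on_continuous_on)
qed

lemma N_lower:
  fixes N :: "'a::euclidean_space \<Rightarrow> real"
  assumes "is_norm N"
  shows "\<exists>m>0. \<forall>x. m * norm x \<le> N x"
proof -
  obtain i :: 'a where i: "i \<in> Basis" using nonempty_Basis by blast
  have ne: "sphere (0::'a) 1 \<noteq> {}" using i by (auto intro!: exI[of _ i])
  obtain x0 where x0: "x0 \<in> sphere 0 1" "\<And>y. y \<in> sphere 0 1 \<Longrightarrow> N x0 \<le> N y"
    using continuous_attains_inf[OF compact_sphere ne N_cont[OF assms]] by blast
  have m: "N x0 > 0" using x0(1) nN(2,5)[OF assms, of x0] by force
  have "N x0 * norm x \<le> N x" for x
  proof (cases "x = 0")
    case True then show ?thesis using nN(1)[OF assms] by simp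
  next
    case False
    have "N x0 \<le> N ((1 / norm x) *\<^sub>R x)" using False by (intro x0(2)) simp
    also have "\<dots> = N x / norm x" using nN(3)[OF assms] by simp
    finally show ?thesis using False by (simp add: field_simps)
  qed
  then show ?thesis using m by blast
qed


lemma dual_bdd:
  fixes N :: "'a::euclidean_space \<Rightarrow> real"
  assumes "is_norm N"
  shows "bdd_above {v \<bullet> w | w. N w = 1}"
proof -
  obtain m where m: "m > 0" "\<And>x. m * norm x \<le> N x" using N_lower[OF assms] by blast
  have "v \<bullet> w \<le> norm v / m" if "N w = 1" for w
  proof -
    have "norm w \<le> 1 / m" using m(2)[of w] that m(1) by (simp add: field_simps)
    have "v \<bullet> w \<le> norm v * norm w" by (simp add: norm_cauchy_schwarz)
    also have "\<dots> \<le> norm v * (1 / m)" using \<open>norm w \<le> 1 / m\<close> by (intro mult_left_mono) auto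
    finally show ?thesis by simp
  qed
  then show ?thesis unfolding bdd_above_def by blast
qed

lemma dual_ne:
  fixes N :: "'a::euclidean_space \<Rightarrow> real"
  assumes "is_norm N"
  shows "\<exists>w. N w = 1"
proof -
  obtain i :: 'a where i: "i \<in> Basis" using nonempty_Basis by blast
  then have "i \<noteq> 0" by auto
  then have "N i > 0" using nN(2,5)[OF assms, of i] by force
  then have "N ((1 / N i) *\<^sub>R i) = 1" using nN(3)[OF assms] by simp
  then show ?thesis by blast
qed

lemma dual_upper:
  fixes N :: "'a::euclidean_space \<Rightarrow> real"
  assumes "is_norm N" "N w = 1"
  shows "v \<bullet> w \<le> dual_norm N v"
  unfolding dual_norm_def using assms by (intro cSup_upper dual_bdd) auto

lemma dual_least:
  fixes N :: "'a::euclidean_space \<Rightarrow> real"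
  assumes "is_norm N" "\<And>w. N w = 1 \<Longrightarrow> v \<bullet> w \<le> M"
  shows "dual_norm N v \<le> M"
  unfolding dual_norm_def using assms dual_ne[OF assms(1)] by (intro cSup_least) auto

lemma holder:
  fixes N :: "'a::euclidean_space \<Rightarrow> real"
  assumes "is_norm N"
  shows "v \<bullet> x \<le> N x * dual_norm N v"
proof (cases "x = 0")
  case True then show ?thesis using nN(1)[OF assms] by simp
next
  case False
  then have p: "N x > 0" using nN(2,5)[OF assms, of x] by force
  then have "N ((1 / N x) *\<^sub>R x) = 1" using nN(3)[OF assms] by simp
  from dual_upper[OF assms this, of v] p show ?thesis by (simp add: field_simps)
qed

lemma dual_nonneg:
  fixes N :: "'a::euclidean_space \<Rightarrow> real"
  assumes "is_norm N"
  shows "dual_norm N v \<ge> 0"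
proof -
  obtain w where w: "N w = 1" using dual_ne[OF assms] by blast
  have "N (- w) = 1" using w nN(6)[OF assms] by simp
  from dual_upper[OF assms w, of v] dual_upper[OF assms this, of v] show ?thesis by simp
qed

lemma dual_scale:
  fixes N :: "'a::euclidean_space \<Rightarrow> real"
  assumes "is_norm N" "s \<ge> 0"
  shows "dual_norm N (s *\<^sub>R v) \<le> s * dual_norm N v"
  using assms dual_upper[OF assms(1)] by (intro dual_least) (auto intro: mult_left_mono)

lemma dual_add:
  fixes N :: "'a::euclidean_space \<Rightarrow> real"
  assumes "is_norm N"
  shows "dual_norm N (x + y) \<le> dual_norm N x + dual_norm N y"
  using assms dual_upper[OF assms(1)] by (intro dual_least) (auto simp: inner_add_left intro: add_mono)

lemma dual_pos:
  fixes N :: "'a::euclidean_space \<Rightarrow> real"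
  assumes "is_norm N" "v \<noteq> 0"
  shows "dual_norm N v > 0"
proof -
  have "v \<bullet> v > 0" using assms(2) by simp
  then have "N v * dual_norm N v > 0" using holder[OF assms(1), of v v] by linarith
  then show ?thesis using nN(2)[OF assms(1), of v] by (simp add: zero_less_mult_iff)
qed

lemma dual_convex:
  fixes N :: "'a::euclidean_space \<Rightarrow> real"
  assumes "is_norm N" "0 \<le> t" "t \<le> 1" "dual_norm N y \<le> dual_norm N b"
  shows "dual_norm N (b + t *\<^sub>R (y - b)) \<le> dual_norm N b"
proof -
  have e: "b + t *\<^sub>R (y - b) = (1 - t) *\<^sub>R b + t *\<^sub>R y" by (simp add: algebra_simps)
  have "dual_norm N ((1 - t) *\<^sub>R b + t *\<^sub>R y) \<le> dual_norm N ((1 - t) *\<^sub>R b) + dual_norm N (t *\<^sub>R y)"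
    by (rule dual_add[OF assms(1)])
  also have "\<dots> \<le> (1 - t) * dual_norm N b + t * dual_norm N y"
    using dual_scale[OF assms(1)] assms(2,3) by (intro add_mono) auto
  also have "\<dots> \<le> (1 - t) * dual_norm N b + t * dual_norm N b"
    using assms(2,4) by (intro add_left_mono mult_left_mono) auto
  finally show ?thesis unfolding e by (simp add: algebra_simps)
qed

lemma N_convex:
  fixes N :: "'a::euclidean_space \<Rightarrow> real"
  assumes "is_norm N" "0 \<le> t" "t \<le> 1" "N x \<le> N a"
  shows "N (a + t *\<^sub>R (x - a)) \<le> N a"
proof -
  have e: "a + t *\<^sub>R (x - a) = (1 - t) *\<^sub>R a + t *\<^sub>R x" by (simp add: algebra_simps)
  have "N ((1 - t) *\<^sub>R a + t *\<^sub>R x) \<le> N ((1 - t) *\<^sub>R a) + N (t *\<^sub>R x)"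
    by (rule nN(4)[OF assms(1)])
  also have "\<dots> = (1 - t) * N a + t * N x"
    using nN(3)[OF assms(1)] assms(2,3) by simp
  also have "\<dots> \<le> (1 - t) * N a + t * N a"
    using assms(2,4) by (intro add_left_mono mult_left_mono) auto
  finally show ?thesis unfolding e by (simp add: algebra_simps)
qed

lemma proj:
  fixes b d :: "'a::real_inner"
  assumes "\<And>t. 0 < t \<Longrightarrow> t \<le> 1 \<Longrightarrow> norm b \<le> norm (b - t *\<^sub>R d)"
  shows "b \<bullet> d \<le> 0"
proof (rule ccontr)
  assume "\<not> ?thesis"
  then have p: "b \<bullet> d > 0" by simp
  then have "d \<noteq> 0" by auto
  then have dd: "d \<bullet> d > 0" by simp
  define t where "t = min 1 ((b \<bullet> d) / (d \<bullet> d))"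
  have t: "0 < t" "t \<le> 1" using p dd unfolding t_def by auto
  have tt: "t * (d \<bullet> d) \<le> b \<bullet> d" using dd unfolding t_def
    by (simp add: min_def field_simps)
  have "(norm b)^2 \<le> (norm (b - t *\<^sub>R d))^2" using assms[OF t] by (simp add: power_mono)
  then have "b \<bullet> b \<le> b \<bullet> b - 2 * t * (b \<bullet> d) + t * t * (d \<bullet> d)"
    by (simp add: power2_norm_eq_inner inner_diff_left inner_diff_right inner_commute algebra_simps)
  then have "t * (2 * (b \<bullet> d) - t * (d \<bullet> d)) \<le> 0" by (simp add: algebra_simps)
  moreover have "2 * (b \<bullet> d) - t * (d \<bullet> d) > 0" using tt p by linarith
  ultimately show False using t by (simp add: mult_le_0_iff)
qed


lemma sep:
  fixes N :: "'a::euclidean_space \<Rightarrow> real"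
  assumes "is_norm N" "a \<noteq> 0"
  shows "\<exists>u. u \<noteq> 0 \<and> dual_norm N u * N a \<le> u \<bullet> a"
proof -
  define S where "S = {a - x | x. N x < N a}"
  have cv: "convex S" unfolding convex_def S_def
  proof (intro allI impI ballI, elim CollectE exE conjE)
    fix p q and s t :: real and x y
    assume h: "0 \<le> s" "0 \<le> t" "s + t = 1" "p = a - x" "N x < N a" "q = a - y" "N y < N a"
    have "s *\<^sub>R p + t *\<^sub>R q = (s + t) *\<^sub>R a - (s *\<^sub>R x + t *\<^sub>R y)" unfolding h(4,6)
      by (simp add: algebra_simps)
    then have e: "s *\<^sub>R p + t *\<^sub>R q = a - (s *\<^sub>R x + t *\<^sub>R y)" using h(3) by simp
    have "N (s *\<^sub>R x + t *\<^sub>R y) \<le> N (s *\<^sub>R x) + N (t *\<^sub>R y)" by (rule nN(4)[OF assms(1)])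
    also have "\<dots> = s * N x + t * N y" using nN(3)[OF assms(1)] h(1,2) by simp
    finally have "N (s *\<^sub>R x + t *\<^sub>R y) \<le> s * N x + t * N y" .
    also have "\<dots> < N a"
    proof (cases "s = 0")
      case True then show ?thesis using h by simp
    next
      case False
      then have "s * N x < s * N a" using h by simp
      moreover have "t * N y \<le> t * N a" using h by (intro mult_left_mono) auto
      ultimately show ?thesis using h(3) by (metis add_less_le_mono distrib_right mult_1)
    qed
    finally show "s *\<^sub>R p + t *\<^sub>R q \<in> {a - x |x. N x < N a}" using e by blast
  qed
  have "0 \<notin> S" unfolding S_def by auto
  from separating_hyperplane_set_0[OF cv this] obtain u where
    u: "u \<noteq> 0" "\<And>z. z \<in> S \<Longrightarrow> 0 \<le> u \<bullet> z" by blast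
  have ux: "u \<bullet> x \<le> u \<bullet> a" if "N x < N a" for x
    using u(2)[of "a - x"] that unfolding S_def by (auto simp: inner_diff_right)
  have Na: "N a > 0" using assms nN(2,5)[OF assms(1), of a] by force
  have ua: "u \<bullet> a \<ge> 0" using ux[of 0] Na nN(1)[OF assms(1)] by simp
  have "dual_norm N u \<le> (u \<bullet> a) / N a"
  proof (rule dual_least[OF assms(1)])
    fix w assume w: "N w = 1"
    show "u \<bullet> w \<le> u \<bullet> a / N a"
    proof (rule ccontr)
      assume "\<not> ?thesis"
      then have g: "N a * (u \<bullet> w) > u \<bullet> a" using Na by (simp add: field_simps)
      then have uw: "u \<bullet> w > 0" using ua Na by (smt (verit) mult_nonneg_nonpos)
      define q where "q = (u \<bullet> a) / (u \<bullet> w)"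
      define t where "t = (q + N a) / 2"
      have lo: "q < N a" using g uw unfolding q_def by (simp add: field_simps)
      have q0: "q \<ge> 0" unfolding q_def using divide_nonneg_pos[OF ua uw] .
      have t1: "t < N a" "t > q" "t \<ge> 0"
        using lo q0 unfolding t_def by auto
      have "N (t *\<^sub>R w) = t" using nN(3)[OF assms(1)] w t1(3) by simp
      then have "u \<bullet> (t *\<^sub>R w) \<le> u \<bullet> a" using ux[of "t *\<^sub>R w"] t1(1) by simp
      moreover have "t * (u \<bullet> w) > u \<bullet> a" using t1(2) uw unfolding q_def by (simp add: field_simps)
      ultimately show False by simp
    qed
  qed
  then show ?thesis using u(1) Na by (auto simp: field_simps)
qed

lemma eq_X2:
  fixes N :: "'a::euclidean_space \<Rightarrow> real"
  assumes "is_norm N" "a \<bullet> b = N a * dual_norm N b"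
  shows "PQ_decomposition N norm (a + b) a b"
  unfolding PQ_decomposition_def
proof (intro conjI refl allI impI)
  fix a' b' assume c: "a + b = a' + b'"
  show "N a < N a' \<or> norm b < norm b' \<or> (N a', norm b') = (N a, norm b)"
  proof (rule ccontr)
    assume neg: "\<not> ?thesis"
    then have h: "N a' \<le> N a" "norm b' \<le> norm b" by auto
    define d where "d = a - a'"
    have bd: "b' = b + d" using c unfolding d_def by (simp add: algebra_simps)
    have "b \<bullet> a' \<le> N a' * dual_norm N b" by (rule holder[OF assms(1)])
    also have "\<dots> \<le> N a * dual_norm N b" using h(1) dual_nonneg[OF assms(1)] by (intro mult_right_mono) auto
    finally have "b \<bullet> d \<ge> 0" using assms(2) unfolding d_def by (simp add: inner_diff_right inner_commute)
    have "(norm b')^2 \<le> (norm b)^2" using h(2) by (simp add: power_mono)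
    then have "b \<bullet> b + 2 * (b \<bullet> d) + d \<bullet> d \<le> b \<bullet> b" unfolding bd
      by (simp add: power2_norm_eq_inner inner_add_left inner_add_right inner_commute)
    then have "d \<bullet> d \<le> 0" using \<open>b \<bullet> d \<ge> 0\<close> by linarith
    then have "d = 0" by (metis inner_eq_zero_iff order_antisym inner_ge_zero)
    then have "a' = a" "b' = b" using bd unfolding d_def by auto
    then show False using neg by simp
  qed
qed

lemma eq_2Y:
  fixes N :: "'a::euclidean_space \<Rightarrow> real"
  assumes "is_norm N" "a \<bullet> b = N a * dual_norm N b"
  shows "PQ_decomposition norm (dual_norm N) (a + b) a b"
  unfolding PQ_decomposition_def
proof (intro conjI refl allI impI)
  fix a' b' assume c: "a + b = a' + b'"
  show "norm a < norm a' \<or> dual_norm N b < dual_norm N b' \<or> (norm a', dual_norm N b') = (norm a, dual_norm N b)"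
  proof (rule ccontr)
    assume neg: "\<not> ?thesis"
    then have h: "norm a' \<le> norm a" "dual_norm N b' \<le> dual_norm N b" by auto
    define d where "d = b - b'"
    have ad: "a' = a + d" using c unfolding d_def by (simp add: algebra_simps)
    have "a \<bullet> b' \<le> N a * dual_norm N b'" using holder[OF assms(1), of b' a] by (simp add: inner_commute)
    also have "\<dots> \<le> N a * dual_norm N b" using h(2) nN(2)[OF assms(1)] by (intro mult_left_mono) auto
    finally have "a \<bullet> d \<ge> 0" using assms(2) unfolding d_def by (simp add: inner_diff_right)
    have "(norm a')^2 \<le> (norm a)^2" using h(1) by (simp add: power_mono)
    then have "a \<bullet> a + 2 * (a \<bullet> d) + d \<bullet> d \<le> a \<bullet> a" unfolding ad
      by (simp add: power2_norm_eq_inner inner_add_left inner_add_right inner_commute)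
    then have "d \<bullet> d \<le> 0" using \<open>a \<bullet> d \<ge> 0\<close> by linarith
    then have "d = 0" by (metis inner_eq_zero_iff order_antisym inner_ge_zero)
    then have "b' = b" "a' = a" using ad unfolding d_def by auto
    then show False using neg by simp
  qed
qed

lemma X2_eq:
  fixes N :: "'a::euclidean_space \<Rightarrow> real"
  assumes "is_norm N" "PQ_decomposition N norm (a + b) a b"
  shows "a \<bullet> b = N a * dual_norm N b"
proof -
  have key: "b \<bullet> x \<le> b \<bullet> a" if x: "N x \<le> N a" for x
  proof -
    have "b \<bullet> (x - a) \<le> 0"
    proof (rule proj)
      fix t :: real assume t: "0 < t" "t \<le> 1"
      have n: "N (a + t *\<^sub>R (x - a)) \<le> N a" using N_convex[OF assms(1) _ t(2) x] t by simp
      have "a + b = (a + t *\<^sub>R (x - a)) + (b - t *\<^sub>R (x - a))" by simp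
      with assms(2) have "N a < N (a + t *\<^sub>R (x - a)) \<or> norm b < norm (b - t *\<^sub>R (x - a)) \<or>
          (N (a + t *\<^sub>R (x - a)), norm (b - t *\<^sub>R (x - a))) = (N a, norm b)"
        unfolding PQ_decomposition_def by blast
      then show "norm b \<le> norm (b - t *\<^sub>R (x - a))" using n by auto
    qed
    then show ?thesis by (simp add: inner_diff_right)
  qed
  have "N a * dual_norm N b \<le> a \<bullet> b"
  proof (cases "a = 0")
    case True then show ?thesis using nN(1)[OF assms(1)] by simp
  next
    case False
    then have Na: "N a > 0" using nN(2,5)[OF assms(1), of a] by force
    have "dual_norm N b \<le> (a \<bullet> b) / N a"
    proof (rule dual_least[OF assms(1)])
      fix w assume w: "N w = 1"
      have "N (N a *\<^sub>R w) = N a" using nN(3)[OF assms(1)] w Na by simp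
      then have "b \<bullet> (N a *\<^sub>R w) \<le> b \<bullet> a" by (intro key) simp
      then show "b \<bullet> w \<le> a \<bullet> b / N a" using Na by (simp add: field_simps inner_commute)
    qed
    then show ?thesis using Na by (simp add: field_simps)
  qed
  moreover have "a \<bullet> b \<le> N a * dual_norm N b" using holder[OF assms(1), of b a] by (simp add: inner_commute)
  ultimately show ?thesis by linarith
qed

lemma Y2_eq:
  fixes N :: "'a::euclidean_space \<Rightarrow> real"
  assumes "is_norm N" "PQ_decomposition norm (dual_norm N) (a + b) a b"
  shows "a \<bullet> b = N a * dual_norm N b"
proof -
  have key: "a \<bullet> y \<le> a \<bullet> b" if y: "dual_norm N y \<le> dual_norm N b" for y
  proof -
    have "a \<bullet> (y - b) \<le> 0"
    proof (rule proj)
      fix t :: real assume t: "0 < t" "t \<le> 1"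
      have n: "dual_norm N (b + t *\<^sub>R (y - b)) \<le> dual_norm N b" using dual_convex[OF assms(1) _ t(2) y] t by simp
      have "a + b = (a - t *\<^sub>R (y - b)) + (b + t *\<^sub>R (y - b))" by simp
      with assms(2) have "norm a < norm (a - t *\<^sub>R (y - b)) \<or> dual_norm N b < dual_norm N (b + t *\<^sub>R (y - b)) \<or>
          (norm (a - t *\<^sub>R (y - b)), dual_norm N (b + t *\<^sub>R (y - b))) = (norm a, dual_norm N b)"
        unfolding PQ_decomposition_def by blast
      then show "norm a \<le> norm (a - t *\<^sub>R (y - b))" using n by auto
    qed
    then show ?thesis by (simp add: inner_diff_right)
  qed
  have "N a * dual_norm N b \<le> a \<bullet> b"
  proof (cases "a = 0")
    case True then show ?thesis using nN(1)[OF assms(1)] by simp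
  next
    case False
    obtain u where u: "u \<noteq> 0" "dual_norm N u * N a \<le> u \<bullet> a" using sep[OF assms(1) False] by blast
    have Yu: "dual_norm N u > 0" by (rule dual_pos[OF assms(1) u(1)])
    define s where "s = dual_norm N b / dual_norm N u"
    have s0: "s \<ge> 0" unfolding s_def using Yu dual_nonneg[OF assms(1), of b] by simp
    have "dual_norm N (s *\<^sub>R u) \<le> s * dual_norm N u" by (rule dual_scale[OF assms(1) s0])
    also have "\<dots> = dual_norm N b" unfolding s_def using Yu by simp
    finally have "a \<bullet> (s *\<^sub>R u) \<le> a \<bullet> b" by (rule key)
    moreover have "s * (dual_norm N u * N a) \<le> s * (u \<bullet> a)" using u(2) s0 by (rule mult_left_mono)
    moreover have "s * (dual_norm N u * N a) = N a * dual_norm N b" unfolding s_def using Yu by simp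
    ultimately show ?thesis by (simp add: inner_commute)
  qed
  moreover have "a \<bullet> b \<le> N a * dual_norm N b" using holder[OF assms(1), of b a] by (simp add: inner_commute)
  ultimately show ?thesis by linarith
qed

theorem proposition2p2:
  fixes normX :: "'a::euclidean_space \<Rightarrow> real" and a b c :: 'a
  assumes "is_norm normX"
    and "c = a + b"
  shows "(PQ_decomposition normX norm c a b \<longleftrightarrow> PQ_decomposition norm (dual_norm normX) c a b)
    \<and> (PQ_decomposition norm (dual_norm normX) c a b \<longleftrightarrow> a \<bullet> b = normX a * dual_norm normX b)"
proof -
  have "PQ_decomposition normX norm c a b \<longleftrightarrow> a \<bullet> b = normX a * dual_norm normX b"
    using eq_X2[OF assms(1), of a b] X2_eq[OF assms(1), of a b] unfolding assms(2) by blast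
  moreover have "PQ_decomposition norm (dual_norm normX) c a b \<longleftrightarrow> a \<bullet> b = normX a * dual_norm normX b"
    using eq_2Y[OF assms(1), of a b] Y2_eq[OF assms(1), of a b] unfolding assms(2) by blast
  ultimately show ?thesis by blast
qed

end
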